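(* Let $T_1,T_2,\dots$ be independent exponential random variables with parameters $\lambda_i=4\sqrt{i+1}$, and for constants $c_1,c_2>0$ and $k\ge1$ let $G=\big\{|\{1\le i\le k: T_i\ge c_2/\sqrt{i}\}|>c_1k\big\}$. For any $\tilde c\in(0,\infty)$ there exist $c_1,c_2>0$ such that for all sufficiently large $k$, $\mathbf P(G^c)\le\exp(-\tilde c k)$. *)

theory Defs
  imports "HOL-Probability.Probability"
begin

end

theory Submission
  imports Defs
begin

theorem mainTheorem6:
  fixes M :: "'a measure" and T :: "nat \<Rightarrow> 'a \<Rightarrow> real"
  assumes "prob_space M"
    and "prob_space.indep_vars M (\<lambda>_. borel) T {1..}"
    and "\<And>i. i \<ge> 1 \<Longrightarrow>
           distributed M lborel (T i) (exponential_density (4 * sqrt (real i + 1)))"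
  shows "\<forall>ct > 0. \<exists>c1 c2. c1 > 0 \<and> c2 > 0 \<and>
           (\<forall>\<^sub>F k in sequentially.
              measure M {\<omega> \<in> space M.
                 \<not> (real (card {i \<in> {1..k}. T i \<omega> \<ge> c2 / sqrt (real i)}) > c1 * real k)}
              \<le> exp (- ct * real k))"
proof (intro allI impI)
  fix ct :: real assume ct: "ct > 0"
  interpret P: prob_space M by fact
  have indep: "P.indep_vars (\<lambda>_. borel) T {1..}" using assms(2) by simp
  define q where "q = exp (-2*ct) / 4"
  define c2 where "c2 = q / 8"
  have q0: "0 < q" unfolding q_def by simp
  have q1: "q \<le> 1"
  proof -
    have "exp (-2*ct) \<le> 1" using ct by simp
    then show ?thesis unfolding q_def by linarith
  qed
  have sq: "sqrt q = exp (-ct) / 2"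
  proof -
    have "q = (exp (-ct) / 2)^2" unfolding q_def
      by (simp add: power2_eq_square flip: exp_add)
    then show ?thesis by simp
  qed
  have c20: "c2 > 0" unfolding c2_def using q0 by simp
  show "\<exists>c1 c2. c1 > 0 \<and> c2 > 0 \<and>
           (\<forall>\<^sub>F k in sequentially.
              measure M {\<omega> \<in> space M.
                 \<not> (real (card {i \<in> {1..k}. T i \<omega> \<ge> c2 / sqrt (real i)}) > c1 * real k)}
              \<le> exp (- ct * real k))"
  proof (intro exI conjI)
    show "(1/2::real) > 0" by simp
    show "c2 > 0" by fact
    show "\<forall>\<^sub>F k in sequentially.
              measure M {\<omega> \<in> space M.
                 \<not> (real (card {i \<in> {1..k}. T i \<omega> \<ge> c2 / sqrt (real i)}) > 1/2 * real k)}
              \<le> exp (- ct * real k)"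
    proof (rule always_eventually, intro allI)
      fix k :: nat
      define A where "A i = T i -` {..<c2/sqrt(real i)} \<inter> space M" for i
      have meas: "i \<ge> 1 \<Longrightarrow> T i \<in> borel_measurable M" for i
        using distributed_measurable[OF assms(3)] by simp
      have Aev: "i \<ge> 1 \<Longrightarrow> A i \<in> P.events" for i
        unfolding A_def using meas by (simp add: measurable_sets)
      have Ap: "P.prob (A i) \<le> q" if i: "i \<ge> 1" for i
      proof -
        define a where "a = c2 / sqrt (real i)"
        define l where "l = 4 * sqrt (real i + 1)"
        have a0: "0 \<le> a" unfolding a_def using c20 by simp
        have l0: "0 < l" unfolding l_def by simp
        have "A i \<subseteq> {x \<in> space M. T i x \<le> a}" unfolding A_def a_def by auto
        moreover have "{x \<in> space M. T i x \<le> a} \<in> P.events"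
          using meas[OF i] by measurable
        ultimately have "P.prob (A i) \<le> P.prob {x \<in> space M. T i x \<le> a}"
          by (intro P.finite_measure_mono)
        also have "\<dots> = 1 - exp (- a * l)"
          using P.exponential_distributedD_le[OF assms(3)[OF i] a0 l0[unfolded l_def]]
          unfolding l_def by simp
        also have "\<dots> \<le> a * l"
          using exp_ge_add_one_self[of "- a * l"] by simp
        also have "\<dots> \<le> q"
        proof -
          have si: "sqrt (real i) > 0" using i by simp
          have "sqrt (real i + 1) \<le> sqrt (4 * real i)" using i by simp
          also have "\<dots> = 2 * sqrt (real i)" by (simp add: real_sqrt_mult)
          finally have h: "sqrt (real i + 1) \<le> 2 * sqrt (real i)" .
          have "a * l = 4 * c2 * (sqrt (real i + 1) / sqrt (real i))"
            unfolding a_def l_def by simp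
          also have "\<dots> \<le> 4 * c2 * 2"
            using h si c20 by (intro mult_left_mono) (auto simp: divide_simps)
          finally show ?thesis unfolding c2_def by simp
        qed
        finally show ?thesis .
      qed
      have Bp: "P.prob (space M \<inter> (\<Inter>i\<in>S. A i)) \<le> q ^ card S" if S: "S \<subseteq> {1..k}" for S
      proof (cases "S = {}")
        case True then show ?thesis by simp
      next
        case False
        have fin: "finite S" using S finite_subset by blast
        have "space M \<inter> (\<Inter>i\<in>S. A i) = (\<Inter>i\<in>S. T i -` {..<c2/sqrt(real i)} \<inter> space M)"
          using False unfolding A_def by auto
        also have "P.prob \<dots> = (\<Prod>i\<in>S. P.prob (T i -` {..<c2/sqrt(real i)} \<inter> space M))"
          using S False fin by (intro P.indep_varsD[OF indep]) auto
        also have "\<dots> \<le> (\<Prod>i\<in>S. q)"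
          using S by (intro prod_mono) (auto simp: Ap[unfolded A_def])
        finally show ?thesis by simp
      qed
      define F where "F = {S. S \<subseteq> {1..k} \<and> real k / 2 \<le> real (card S)}"
      have finF: "finite F" unfolding F_def by simp
      let ?E = "{\<omega> \<in> space M.
                 \<not> (real (card {i \<in> {1..k}. T i \<omega> \<ge> c2 / sqrt (real i)}) > 1/2 * real k)}"
      have Bev: "space M \<inter> (\<Inter>i\<in>S. A i) \<in> P.events" if "S \<in> F" for S
      proof (cases "S = {}")
        case True then show ?thesis by simp
      next
        case False
        then have "space M \<inter> (\<Inter>i\<in>S. A i) = (\<Inter>i\<in>S. A i)" unfolding A_def by auto
        moreover have "(\<Inter>i\<in>S. A i) \<in> P.events"
          using that False Aev finF unfolding F_def
          by (intro sets.finite_INT) (auto intro: finite_subset)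
        ultimately show ?thesis by simp
      qed
      have sub: "?E \<subseteq> (\<Union>S\<in>F. space M \<inter> (\<Inter>i\<in>S. A i))"
      proof
        fix \<omega> assume w: "\<omega> \<in> ?E"
        define S where "S = {i \<in> {1..k}. T i \<omega> < c2 / sqrt (real i)}"
        have "{i \<in> {1..k}. T i \<omega> \<ge> c2 / sqrt (real i)} = {1..k} - S"
          unfolding S_def by auto
        moreover have "card ({1..k} - S) = k - card S"
          by (subst card_Diff_subset) (auto simp: S_def intro: finite_subset)
        ultimately have "card {i \<in> {1..k}. T i \<omega> \<ge> c2 / sqrt (real i)} = k - card S"
          by simp
        moreover have Ssub: "S \<subseteq> {1..k}" unfolding S_def by blast
        moreover have "card S \<le> k"
        proof -
          have "card S \<le> card {1..k}" using Ssub by (intro card_mono) simp_all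
          then show ?thesis by simp
        qed
        ultimately have eq: "real (card {i \<in> {1..k}. T i \<omega> \<ge> c2 / sqrt (real i)}) = real k - real (card S)"
          by (simp add: of_nat_diff)
        have "\<not> (real (card {i \<in> {1..k}. T i \<omega> \<ge> c2 / sqrt (real i)}) > 1/2 * real k)"
          using CollectD[OF w] by (rule conjunct2)
        then have "real k / 2 \<le> real (card S)" unfolding eq by linarith
        then have "S \<in> F" unfolding F_def using Ssub by blast
        moreover have "\<omega> \<in> space M \<inter> (\<Inter>i\<in>S. A i)" using w unfolding S_def A_def by auto
        ultimately show "\<omega> \<in> (\<Union>S\<in>F. space M \<inter> (\<Inter>i\<in>S. A i))" by blast
      qed
      have Uev: "(\<Union>S\<in>F. space M \<inter> (\<Inter>i\<in>S. A i)) \<in> P.events"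
        using Bev finF by (intro sets.finite_UN) auto
      have "measure M ?E \<le> measure M (\<Union>S\<in>F. space M \<inter> (\<Inter>i\<in>S. A i))"
        by (rule P.finite_measure_mono[OF sub Uev])
      also have "\<dots> \<le> (\<Sum>S\<in>F. measure M (space M \<inter> (\<Inter>i\<in>S. A i)))"
        using Bev finF by (intro measure_UNION_le) auto
      also have "\<dots> \<le> (\<Sum>S\<in>F. sqrt q ^ k)"
      proof (intro sum_mono)
        fix S assume S: "S \<in> F"
        have "q ^ card S = sqrt q ^ (2 * card S)"
          using q0 by (simp add: power_mult)
        also have "\<dots> \<le> sqrt q ^ k"
        proof (rule power_decreasing)
          have "real k / 2 \<le> real (card S)" using S unfolding F_def by blast
          then show "k \<le> 2 * card S" by linarith
          show "0 \<le> sqrt q" using q0 by simp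
          show "sqrt q \<le> 1" using q1 by simp
        qed
        finally have "q ^ card S \<le> sqrt q ^ k" .
        moreover have "S \<subseteq> {1..k}" using S unfolding F_def by blast
        ultimately show "measure M (space M \<inter> (\<Inter>i\<in>S. A i)) \<le> sqrt q ^ k"
          using Bp by (meson order_trans)
      qed
      also have "\<dots> \<le> (\<Sum>S\<in>Pow {1..k}. sqrt q ^ k)"
        using q0 by (intro sum_mono2) (auto simp: F_def)
      also have "\<dots> = 2 ^ k * sqrt q ^ k" by (simp add: card_Pow)
      also have "\<dots> = exp (- ct * real k)"
      proof -
        have "(2::real) ^ k * sqrt q ^ k = (2 * sqrt q) ^ k" by (rule power_mult_distrib[symmetric])
        also have "2 * sqrt q = exp (- ct)" using sq by simp
        also have "exp (- ct) ^ k = exp (real k * (- ct))" by (rule exp_of_nat_mult[symmetric])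
        finally show ?thesis by (simp add: mult.commute)
      qed
      finally show "measure M ?E \<le> exp (- ct * real k)" .
    qed
  qed
qed

end
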